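(* For the measure $\mu$ defined by $\int_{\mathbb{L}}\varphi\,\mathrm{d}\mu=\mathbb{E}[\varphi(\Lambda(X,Y))/d(X,Y)^2]$, with $X,Y$ independent non-backtracking random walks on $\mathbb{T}$ from the root, one has $$\mu\langle x,y\rangle=\tfrac{8}{9}\cdot 2^{-d(x,y)}\quad\text{for all vertices }x\neq y\text{ of }\mathbb{T}.$$
   Context: $\mathbb{T}$ is the $3$-regular tree with graph distance $d$ and root $\varnothing$. Rays are infinite non-backtracking paths from $\varnothing$, and $\partial\mathbb{T}$ is the set of rays. For distinct rays, $\xi\wedge\eta$ is their last common vertex, and the metric on $\partial\mathbb{T}$ is $d(\xi,\eta)=2^{-d(\varnothing,\xi\wedge\eta)}$. $\Lambda(\xi,\eta)$ is the bi-infinite geodesic (line) with ends $\xi,\eta$, and $\mathbb{L}$ is the set of lines. $\langle x,y\rangle$ is the set of lines passing through both $x$ and $y$. A non-backtracking random walk from the root is viewed as a random element of $\partial\mathbb{T}$. *)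

theory Defs
  imports "HOL-Probability.Probability"
begin

text \<open>Vertices of the 3-regular tree T: finite words; the root is the empty word,
  the first letter ranges over {0,1,2} (the 3 neighbours of the root), every further
  letter over {0,1} (the 2 children of a non-root vertex).\<close>

definition arity :: "nat \<Rightarrow> nat" where
  "arity i = (if i = 0 then 3 else 2)"

definition is_vertex :: "nat list \<Rightarrow> bool" where
  "is_vertex v \<longleftrightarrow> (\<forall>i < length v. v ! i < arity i)"

fun lcp_len :: "nat list \<Rightarrow> nat list \<Rightarrow> nat" where
  "lcp_len (a # as) (b # bs) = (if a = b then Suc (lcp_len as bs) else 0)"
| "lcp_len _ _ = 0"

text \<open>Graph distance in the tree: path through the last common ancestor.\<close>
definition tdist :: "nat list \<Rightarrow> nat list \<Rightarrow> nat" where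
  "tdist x y = length x + length y - 2 * lcp_len x y"

text \<open>Rays (elements of the boundary): infinite non-backtracking paths from the root,
  encoded by their sequence of letters; the ray visits the vertices prefix xi n.\<close>
definition is_ray :: "(nat \<Rightarrow> nat) \<Rightarrow> bool" where
  "is_ray xi \<longleftrightarrow> (\<forall>i. xi i < arity i)"

definition prefix_of :: "(nat \<Rightarrow> nat) \<Rightarrow> nat \<Rightarrow> nat list" where
  "prefix_of xi n = map xi [0..<n]"

text \<open>d(root, xi \<and> eta) for distinct rays: length of the longest common prefix.\<close>
definition conf :: "(nat \<Rightarrow> nat) \<Rightarrow> (nat \<Rightarrow> nat) \<Rightarrow> nat" where
  "conf xi eta = (LEAST n. xi n \<noteq> eta n)"

definition bdist :: "(nat \<Rightarrow> nat) \<Rightarrow> (nat \<Rightarrow> nat) \<Rightarrow> real" where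
  "bdist xi eta = (1/2) ^ conf xi eta"

text \<open>The line Lambda(xi,eta), represented by its vertex set.\<close>
definition Lambda :: "(nat \<Rightarrow> nat) \<Rightarrow> (nat \<Rightarrow> nat) \<Rightarrow> nat list set" where
  "Lambda xi eta = {prefix_of xi n | n. conf xi eta \<le> n} \<union> {prefix_of eta n | n. conf xi eta \<le> n}"

definition lines_through :: "nat list \<Rightarrow> nat list \<Rightarrow> nat list set set" where
  "lines_through x y = {L. (\<exists>xi eta. is_ray xi \<and> is_ray eta \<and> xi \<noteq> eta \<and> L = Lambda xi eta)
                          \<and> x \<in> L \<and> y \<in> L}"

text \<open>Law of the non-backtracking random walk from the root, as a random ray:
  independent uniform letters.\<close>
definition step_pmf :: "nat \<Rightarrow> nat pmf" where
  "step_pmf i = pmf_of_set {0..<arity i}"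

definition nbrw :: "(nat \<Rightarrow> nat) measure" where
  "nbrw = (\<Pi>\<^sub>M i\<in>UNIV. measure_pmf (step_pmf i))"

text \<open>mu(A) = E[ 1_A(Lambda(X,Y)) / d(X,Y)^2 ], X, Y independent walks
  (the diagonal X = Y is a null set and contributes 0).\<close>
definition mu :: "nat list set set \<Rightarrow> ennreal" where
  "mu A = (\<integral>\<^sup>+ p. (if fst p \<noteq> snd p
      then indicator A (Lambda (fst p) (snd p)) * ennreal (1 / (bdist (fst p) (snd p))\<^sup>2)
      else 0) \<partial>(nbrw \<Otimes>\<^sub>M nbrw))"

end

theory Submission
  imports Defs
begin

lemma ar_pos: "0 < arity i" by (simp add: arity_def)

lemma nbrw_prob: "prob_space nbrw"
  unfolding nbrw_def by (intro prob_space_PiM) (simp add: measure_pmf.prob_space_axioms)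

lemma space_nbrw[simp]: "space nbrw = UNIV"
  unfolding nbrw_def by (simp add: space_PiM)

lemma cyl_eq: "{xi. \<forall>i\<in>J. xi i \<in> S i} = prod_emb UNIV (\<lambda>i. measure_pmf (step_pmf i)) J (Pi\<^sub>E J S)"
  by (auto simp: prod_emb_iff PiE_iff)

lemma cyl_sets: "finite J \<Longrightarrow> {xi. \<forall>i\<in>J. xi i \<in> S i} \<in> sets nbrw"
  unfolding cyl_eq nbrw_def by (intro sets_PiM_I) auto

lemma cyl_emeasure: "finite J \<Longrightarrow>
   emeasure nbrw {xi. \<forall>i\<in>J. xi i \<in> S i} = (\<Prod>i\<in>J. ennreal (measure (measure_pmf (step_pmf i)) (S i)))"
  unfolding cyl_eq nbrw_def
  by (subst emeasure_PiM_emb) (auto simp: measure_pmf.prob_space_axioms measure_pmf.emeasure_eq_measure)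

lemma step_single: "a < arity i \<Longrightarrow> measure (measure_pmf (step_pmf i)) {a} = 1 / arity i"
  unfolding step_pmf_def using ar_pos[of i]
  by (subst measure_pmf_of_set) auto

lemma step_compl: "a < arity i \<Longrightarrow> measure (measure_pmf (step_pmf i)) (-{a}) = (arity i - 1) / arity i"
proof -
  assume a: "a < arity i"
  have "{0..<arity i} \<inter> - {a} = {0..<arity i} - {a}" by auto
  then show ?thesis unfolding step_pmf_def using ar_pos[of i] a
    by (subst measure_pmf_of_set) (auto simp: of_nat_diff)
qed

definition P :: "nat \<Rightarrow> real" where "P n = (\<Prod>i<n. 1 / real (arity i))"
definition D :: "nat \<Rightarrow> real" where "D k = P k * ((real (arity k) - 1) / real (arity k))"

lemma P_Suc: "P (Suc n) = 2/3 * (1/2)^(Suc n)"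
  by (induction n) (auto simp: P_def arity_def)

lemma P_nonneg: "0 \<le> P n" unfolding P_def by (auto intro: prod_nonneg)

lemma D_0: "D 0 = 2/3" by (simp add: D_def P_def arity_def)
lemma D_Suc: "D (Suc k) = 1/3 * (1/2)^(Suc k)"
  by (simp add: D_def P_Suc arity_def)
lemma D_nonneg: "0 \<le> D k" unfolding D_def using P_nonneg[of k] ar_pos[of k]
  by (auto intro!: mult_nonneg_nonneg divide_nonneg_pos simp: Suc_le_eq)

definition cyl :: "nat list \<Rightarrow> (nat \<Rightarrow> nat) set" where
  "cyl v = {xi. \<forall>i\<in>{..<length v}. xi i \<in> {v!i}}"
definition dcyl :: "nat list \<Rightarrow> nat \<Rightarrow> (nat \<Rightarrow> nat) set" where
  "dcyl y k = {xi. \<forall>i\<in>{..<Suc k}. xi i \<in> (if i < k then {y!i} else -{y!k})}"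

lemma cyl_iff: "xi \<in> cyl v \<longleftrightarrow> (\<forall>i<length v. xi i = v!i)" by (auto simp: cyl_def)
lemma dcyl_iff: "xi \<in> dcyl y k \<longleftrightarrow> (\<forall>i<k. xi i = y!i) \<and> xi k \<noteq> y!k"
  by (auto simp: dcyl_def less_Suc_eq)

lemma cyl_in[measurable]: "cyl v \<in> sets nbrw" unfolding cyl_def by (rule cyl_sets) auto
lemma dcyl_in[measurable]: "dcyl v k \<in> sets nbrw" unfolding dcyl_def by (rule cyl_sets) auto

lemma cyl_meas: "is_vertex v \<Longrightarrow> emeasure nbrw (cyl v) = ennreal (P (length v))"
  unfolding cyl_def P_def is_vertex_def
  by (subst cyl_emeasure) (auto simp: step_single prod_ennreal intro!: prod.cong)

lemma dcyl_meas: "is_vertex v \<Longrightarrow> k < length v \<Longrightarrow> emeasure nbrw (dcyl v k) = ennreal (D k)"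
proof -
  assume v: "is_vertex v" and k: "k < length v"
  have "emeasure nbrw (dcyl v k) = (\<Prod>i<Suc k. ennreal (measure (measure_pmf (step_pmf i)) (if i < k then {v!i} else -{v!k})))"
    unfolding dcyl_def by (subst cyl_emeasure) auto
  also have "\<dots> = (\<Prod>i<Suc k. ennreal (if i < k then 1 / real (arity i) else (real (arity k) - 1) / real (arity k)))"
    using v k unfolding is_vertex_def
    by (intro prod.cong refl arg_cong[where f=ennreal]) (auto simp: step_single step_compl less_Suc_eq)
  also have "\<dots> = ennreal (D k)"
    using ar_pos[of k]
    by (subst prod_ennreal) (auto simp: D_def P_def Suc_le_eq intro!: divide_nonneg_pos)
  finally show ?thesis .
qed

lemma nonray_null: "(\<Union>i. {xi. \<forall>j\<in>{i}. xi j \<in> {arity i..}}) \<in> null_sets nbrw"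
proof (intro null_sets_UN)
  fix i
  have "emeasure nbrw {xi. \<forall>j\<in>{i}. xi j \<in> {arity i..}} = ennreal (measure (measure_pmf (step_pmf i)) {arity i..})"
    by (subst cyl_emeasure) auto
  also have "measure (measure_pmf (step_pmf i)) {arity i..} = 0"
    unfolding step_pmf_def using ar_pos[of i] by (subst measure_pmf_of_set) auto
  finally show "{xi. \<forall>j\<in>{i}. xi j \<in> {arity i..}} \<in> null_sets nbrw"
    using cyl_sets[of "{i}" "\<lambda>_. {arity i..}"] by (auto simp: null_sets_def)
qed

lemma AE_rays: "AE p in nbrw \<Otimes>\<^sub>M nbrw. is_ray (fst p) \<and> is_ray (snd p)"
proof -
  interpret prob_space nbrw by (rule nbrw_prob)
  define Nr where "Nr = (\<Union>i. {xi. \<forall>j\<in>{i}. xi j \<in> {arity i..}})"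
  have Nr: "Nr \<in> null_sets nbrw" unfolding Nr_def by (rule nonray_null)
  have "Nr \<times> UNIV \<in> null_sets (nbrw \<Otimes>\<^sub>M nbrw)"
    using Nr by (intro times_in_null_sets1) (auto simp flip: space_nbrw)
  moreover have "UNIV \<times> Nr \<in> null_sets (nbrw \<Otimes>\<^sub>M nbrw)"
    using Nr by (intro times_in_null_sets2) (auto simp flip: space_nbrw)
  ultimately have "Nr \<times> UNIV \<union> UNIV \<times> Nr \<in> null_sets (nbrw \<Otimes>\<^sub>M nbrw)" by auto
  then show ?thesis
    by (rule AE_I') (auto simp: Nr_def is_ray_def not_less)
qed

lemma lcp_le: "lcp_len x y \<le> length x \<and> lcp_len x y \<le> length y"
  by (induction x y rule: lcp_len.induct) auto

lemma lcp_eq: "i < lcp_len x y \<Longrightarrow> x!i = y!i"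
  by (induction x y arbitrary: i rule: lcp_len.induct) (auto split: if_splits simp: nth_Cons split: nat.splits)

lemma lcp_neq: "lcp_len x y < length x \<Longrightarrow> lcp_len x y < length y \<Longrightarrow> x!(lcp_len x y) \<noteq> y!(lcp_len x y)"
  by (induction x y rule: lcp_len.induct) auto

lemma lcp_Nil2[simp]: "lcp_len x [] = 0" by (cases x) auto

lemma lcp_sym: "lcp_len x y = lcp_len y x"
  by (induction x y rule: lcp_len.induct) auto

lemma conf_props: "xi \<noteq> eta \<Longrightarrow> (\<forall>i<conf xi eta. xi i = eta i) \<and> xi (conf xi eta) \<noteq> eta (conf xi eta)"
proof -
  assume "xi \<noteq> eta"
  then have ex: "\<exists>n. xi n \<noteq> eta n" by auto
  show ?thesis unfolding conf_def using LeastI_ex[OF ex] not_less_Least by blast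
qed

lemma conf_eq: "(\<forall>i<k. xi i = eta i) \<Longrightarrow> xi k \<noteq> eta k \<Longrightarrow> conf xi eta = k"
  unfolding conf_def by (rule Least_equality) (auto simp: not_less[symmetric])

lemma prefix_eq: "prefix_of xi n = v \<longleftrightarrow> length v = n \<and> (\<forall>i<n. xi i = v!i)"
  unfolding prefix_of_def by (auto simp: list_eq_iff_nth_eq)

lemma mem_Lambda: "v \<in> Lambda xi eta \<longleftrightarrow> conf xi eta \<le> length v \<and> (xi \<in> cyl v \<or> eta \<in> cyl v)"
  unfolding Lambda_def cyl_iff by (auto simp: prefix_eq) (metis prefix_eq)+

lemma weight: "1 / (bdist xi eta)\<^sup>2 = 4 ^ conf xi eta"
proof -
  have "((1/2::real) ^ conf xi eta)\<^sup>2 = (1/4) ^ conf xi eta"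
    by (simp add: power2_eq_square flip: power_mult_distrib)
  then show ?thesis unfolding bdist_def by (simp add: power_one_over)
qed

lemma lines_iff: "is_ray xi \<Longrightarrow> is_ray eta \<Longrightarrow> xi \<noteq> eta \<Longrightarrow>
   Lambda xi eta \<in> lines_through x y \<longleftrightarrow> x \<in> Lambda xi eta \<and> y \<in> Lambda xi eta"
  unfolding lines_through_def by blast

definition Fint :: "nat list \<Rightarrow> nat list \<Rightarrow> (nat \<Rightarrow> nat) \<times> (nat \<Rightarrow> nat) \<Rightarrow> ennreal" where
  "Fint x y p = (if fst p \<noteq> snd p
      then indicator (lines_through x y) (Lambda (fst p) (snd p)) * ennreal (1 / (bdist (fst p) (snd p))\<^sup>2)
      else 0)"

lemma mu_Fint: "mu (lines_through x y) = (\<integral>\<^sup>+ p. Fint x y p \<partial>(nbrw \<Otimes>\<^sub>M nbrw))"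
  unfolding mu_def Fint_def ..

lemma Fint_ray: "is_ray xi \<Longrightarrow> is_ray eta \<Longrightarrow>
  Fint x y (xi, eta) = (if xi \<noteq> eta \<and> x \<in> Lambda xi eta \<and> y \<in> Lambda xi eta then ennreal (4 ^ conf xi eta) else 0)"
  unfolding Fint_def by (auto simp: lines_iff weight indicator_def)

lemma cyl_excl: "i < length x \<Longrightarrow> i < length y \<Longrightarrow> x!i \<noteq> y!i \<Longrightarrow> xi \<in> cyl x \<Longrightarrow> xi \<in> cyl y \<Longrightarrow> False"
  by (auto simp: cyl_iff)

lemma case2_pt:
  assumes m1: "lcp_len x y < length x" and m2: "lcp_len x y < length y"
    and r: "is_ray xi" "is_ray eta"
  shows "Fint x y (xi, eta) = ennreal (4 ^ lcp_len x y) * indicator (cyl x \<times> cyl y) (xi, eta)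
      + ennreal (4 ^ lcp_len x y) * indicator (cyl y \<times> cyl x) (xi, eta)"
proof -
  let ?m = "lcp_len x y"
  have ne: "x!?m \<noteq> y!?m" using lcp_neq m1 m2 by blast
  have ex1: "xi \<in> cyl x \<Longrightarrow> xi \<in> cyl y \<Longrightarrow> False" for xi
    using cyl_excl[OF m1 m2 ne] by blast
  have cf: "conf a b = ?m" if "a \<in> cyl x" "b \<in> cyl y" for a b
  proof (rule conf_eq)
    show "\<forall>i<?m. a i = b i" using that m1 m2 lcp_eq[of _ x y] by (auto simp: cyl_iff)
    show "a ?m \<noteq> b ?m" using that m1 m2 ne by (auto simp: cyl_iff)
  qed
  have cf': "conf a b = ?m" if "a \<in> cyl y" "b \<in> cyl x" for a b
  proof (rule conf_eq)
    show "\<forall>i<?m. a i = b i" using that m1 m2 lcp_eq[of _ x y] by (auto simp: cyl_iff)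
    show "a ?m \<noteq> b ?m" using that m1 m2 ne by (auto simp: cyl_iff)
  qed
  show ?thesis
  proof (cases "xi \<in> cyl x \<and> eta \<in> cyl y")
    case True
    then have "xi \<noteq> eta" using ex1 by blast
    moreover have "x \<in> Lambda xi eta" "y \<in> Lambda xi eta"
      using True cf[of xi eta] m1 m2 by (auto simp: mem_Lambda)
    ultimately show ?thesis using True cf[of xi eta] ex1 r by (auto simp: Fint_ray indicator_def)
  next
    case F1: False
    show ?thesis
    proof (cases "xi \<in> cyl y \<and> eta \<in> cyl x")
      case True
      then have "xi \<noteq> eta" using ex1 by blast
      moreover have "x \<in> Lambda xi eta" "y \<in> Lambda xi eta"
        using True cf'[of xi eta] m1 m2 by (auto simp: mem_Lambda)
      ultimately show ?thesis using True cf'[of xi eta] ex1 r F1 by (auto simp: Fint_ray indicator_def)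
    next
      case False
      have "\<not> (x \<in> Lambda xi eta \<and> y \<in> Lambda xi eta)"
        using F1 False ex1 by (auto simp: mem_Lambda)
      then show ?thesis using F1 False r by (auto simp: Fint_ray indicator_def)
    qed
  qed
qed

definition T :: "nat list \<Rightarrow> nat \<Rightarrow> (nat \<Rightarrow> nat) \<times> (nat \<Rightarrow> nat) \<Rightarrow> ennreal" where
  "T y k p = ennreal (4 ^ k) * indicator (cyl y \<times> dcyl y k) p + ennreal (4 ^ k) * indicator (dcyl y k \<times> cyl y) p"

lemma case1_pt:
  assumes m1: "lcp_len x y = length x" and m2: "length x < length y"
    and r: "is_ray xi" "is_ray eta"
  shows "Fint x y (xi, eta) = (\<Sum>k\<in>{..length x}. T y k (xi, eta))"
proof -
  let ?a = "length x" and ?c = "conf xi eta"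
  have cA: "conf a b = k" if "a \<in> cyl y" "b \<in> dcyl y k" "k < length y" for a b k
    using that by (intro conf_eq) (auto simp: cyl_iff dcyl_iff)
  have cB: "conf a b = k" if "a \<in> dcyl y k" "b \<in> cyl y" "k < length y" for a b k
    using that by (intro conf_eq) (auto simp: cyl_iff dcyl_iff)
  have ex: "a \<in> cyl y \<Longrightarrow> a \<in> dcyl y k \<Longrightarrow> k < length y \<Longrightarrow> False" for a k
    by (auto simp: cyl_iff dcyl_iff)
  have Tk: "T y k (xi, eta) = (if k = ?c then T y ?c (xi, eta) else 0)" if "k \<le> ?a" for k
  proof (cases "k = ?c")
    case False
    then show ?thesis using cA[where a=xi and b=eta and k=k] cB[where a=xi and b=eta and k=k] that m2
      by (auto simp: T_def indicator_def)
  qed simp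
  have "(\<Sum>k\<in>{..?a}. T y k (xi, eta)) = (\<Sum>k\<in>{..?a}. if k = ?c then T y ?c (xi, eta) else 0)"
    using Tk by (intro sum.cong) auto
  also have "\<dots> = (if ?c \<le> ?a then T y ?c (xi, eta) else 0)"
    by (subst sum.delta) auto
  finally have S: "(\<Sum>k\<in>{..?a}. T y k (xi, eta)) = (if ?c \<le> ?a then T y ?c (xi, eta) else 0)" .
  show ?thesis
  proof (cases "xi = eta")
    case True
    then show ?thesis unfolding S using ex[where a=eta and k="?c"] m2 r
      by (auto simp: T_def Fint_ray indicator_def)
  next
    case ne: False
    have cp: "\<forall>i<?c. xi i = eta i" "xi ?c \<noteq> eta ?c" using conf_props[OF ne] by auto
    have iff: "(x \<in> Lambda xi eta \<and> y \<in> Lambda xi eta) \<longleftrightarrow>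
       ?c \<le> ?a \<and> (xi \<in> cyl y \<and> eta \<in> dcyl y ?c \<or> xi \<in> dcyl y ?c \<and> eta \<in> cyl y)"
    proof
      assume L: "x \<in> Lambda xi eta \<and> y \<in> Lambda xi eta"
      then have ca: "?c \<le> ?a" by (auto simp: mem_Lambda)
      from L have "xi \<in> cyl y \<or> eta \<in> cyl y" by (auto simp: mem_Lambda)
      then show "?c \<le> ?a \<and> (xi \<in> cyl y \<and> eta \<in> dcyl y ?c \<or> xi \<in> dcyl y ?c \<and> eta \<in> cyl y)"
        using ca m2 cp by (auto simp: cyl_iff dcyl_iff)
    next
      assume R: "?c \<le> ?a \<and> (xi \<in> cyl y \<and> eta \<in> dcyl y ?c \<or> xi \<in> dcyl y ?c \<and> eta \<in> cyl y)"
      have xy: "a \<in> cyl y \<Longrightarrow> a \<in> cyl x" for a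
        using m1 m2 lcp_eq[of _ x y] by (auto simp: cyl_iff)
      show "x \<in> Lambda xi eta \<and> y \<in> Lambda xi eta"
        using R xy m2 by (auto simp: mem_Lambda)
    qed
    show ?thesis unfolding S using ne r iff ex[where a=xi and k="?c"] ex[where a=eta and k="?c"] m2
      by (auto simp: T_def Fint_ray indicator_def)
  qed
qed

lemma sumD: "(\<Sum>k\<le>a. 4 ^ k * D k) = 2 ^ (Suc a) / 3"
proof (induction a)
  case 0 then show ?case by (simp add: D_0)
next
  case (Suc a)
  have "(4::real) ^ Suc a * D (Suc a) = 2 ^ Suc a / 3"
    unfolding D_Suc by (simp add: power_mult_distrib[symmetric])
  then show ?case using Suc by simp
qed

lemma arith1: "a < b \<Longrightarrow> (\<Sum>k\<le>a. 4 ^ k * (P b * D k + D k * P b)) = 8/9 * (1/2::real) ^ (b - a)"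
proof -
  assume ab: "a < b"
  then obtain b' where b: "b = Suc b'" by (cases b) auto
  have "(\<Sum>k\<le>a. 4 ^ k * (P b * D k + D k * P b)) = 2 * P b * (\<Sum>k\<le>a. 4 ^ k * D k)"
    by (simp add: sum_distrib_left algebra_simps)
  also have "\<dots> = 8/9 * ((1/2) ^ b * 2 ^ a)"
    unfolding sumD b P_Suc by simp
  also have "(1/2::real) ^ b * 2 ^ a = (1/2) ^ (b - a)"
  proof -
    have "(1/2::real) ^ b = (1/2) ^ (b - a) * (1/2) ^ a" using ab by (simp flip: power_add)
    then show ?thesis by (simp add: power_one_over)
  qed
  finally show ?thesis .
qed

lemma arith2: "m < a \<Longrightarrow> m < b \<Longrightarrow> 4 ^ m * (P a * P b) + 4 ^ m * (P b * P a) = 8/9 * (1/2::real) ^ (a + b - 2 * m)"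
proof -
  assume ma: "m < a" and mb: "m < b"
  then obtain a' b' where a: "a = Suc a'" and b: "b = Suc b'" by (cases a; cases b) auto
  have "4 ^ m * (P a * P b) + 4 ^ m * (P b * P a) = 8/9 * (4 ^ m * (1/2::real) ^ (a + b))"
    unfolding a b P_Suc by (simp add: power_add)
  also have "(1/2::real) ^ (a + b) = (1/2) ^ (a + b - 2 * m) * (1/2) ^ (2 * m)"
    using ma mb by (simp flip: power_add)
  also have "(4::real) ^ m * ((1/2) ^ (a + b - 2 * m) * (1/2) ^ (2 * m)) = (1/2) ^ (a + b - 2 * m)"
    by (simp add: power_mult power_one_over)
  finally show ?thesis .
qed

lemma prod_sets[measurable]: "A \<in> sets nbrw \<Longrightarrow> B \<in> sets nbrw \<Longrightarrow> A \<times> B \<in> sets (nbrw \<Otimes>\<^sub>M nbrw)"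
  by (rule pair_measureI)

lemma prod_meas: "A \<in> sets nbrw \<Longrightarrow> B \<in> sets nbrw \<Longrightarrow> emeasure (nbrw \<Otimes>\<^sub>M nbrw) (A \<times> B) = emeasure nbrw A * emeasure nbrw B"
proof -
  interpret prob_space nbrw by (rule nbrw_prob)
  show "A \<in> sets nbrw \<Longrightarrow> B \<in> sets nbrw \<Longrightarrow> ?thesis" by (rule emeasure_pair_measure_Times)
qed

lemma T_meas[measurable]: "T y k \<in> borel_measurable (nbrw \<Otimes>\<^sub>M nbrw)"
  unfolding T_def by measurable

lemma case1_int:
  assumes vx: "is_vertex x" and vy: "is_vertex y"
    and m1: "lcp_len x y = length x" and m2: "length x < length y"
  shows "mu (lines_through x y) = ennreal (8/9 * (1/2) ^ (length y - length x))"
proof -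
  let ?N = "nbrw \<Otimes>\<^sub>M nbrw" and ?a = "length x" and ?b = "length y"
  have "mu (lines_through x y) = (\<integral>\<^sup>+ p. (\<Sum>k\<in>{..?a}. T y k p) \<partial>?N)"
    unfolding mu_Fint
  proof (rule nn_integral_cong_AE)
    show "AE p in ?N. Fint x y p = (\<Sum>k\<in>{..?a}. T y k p)"
      using AE_rays by eventually_elim (use case1_pt[OF m1 m2] in auto)
  qed
  also have "\<dots> = (\<Sum>k\<in>{..?a}. \<integral>\<^sup>+ p. T y k p \<partial>?N)"
    by (rule nn_integral_sum) auto
  also have "\<dots> = (\<Sum>k\<in>{..?a}. ennreal (4 ^ k * (P ?b * D k + D k * P ?b)))"
  proof (rule sum.cong[OF refl])
    fix k assume "k \<in> {..?a}"
    then have kb: "k < ?b" using m2 by auto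
    have "(\<integral>\<^sup>+ p. T y k p \<partial>?N) = ennreal (4 ^ k) * emeasure ?N (cyl y \<times> dcyl y k)
        + ennreal (4 ^ k) * emeasure ?N (dcyl y k \<times> cyl y)"
      unfolding T_def
      by (subst nn_integral_add) (auto simp: nn_integral_cmult_indicator)
    also have "\<dots> = ennreal (4 ^ k * (P ?b * D k + D k * P ?b))"
      using P_nonneg[of ?b] D_nonneg[of k]
      by (simp add: prod_meas cyl_meas[OF vy] dcyl_meas[OF vy kb] ennreal_mult' flip: distrib_left ennreal_plus) (simp add: mult_2 mult.commute)
    finally show "(\<integral>\<^sup>+ p. T y k p \<partial>?N) = ennreal (4 ^ k * (P ?b * D k + D k * P ?b))" .
  qed
  also have "\<dots> = ennreal (\<Sum>k\<le>?a. 4 ^ k * (P ?b * D k + D k * P ?b))"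
    using P_nonneg[of ?b] D_nonneg by (subst sum_ennreal) (auto simp: atMost_def)
  also have "\<dots> = ennreal (8/9 * (1/2) ^ (?b - ?a))" by (simp only: arith1[OF m2])
  finally show ?thesis .
qed

lemma case2_int:
  assumes vx: "is_vertex x" and vy: "is_vertex y"
    and m1: "lcp_len x y < length x" and m2: "lcp_len x y < length y"
  shows "mu (lines_through x y) = ennreal (8/9 * (1/2) ^ (length x + length y - 2 * lcp_len x y))"
proof -
  let ?N = "nbrw \<Otimes>\<^sub>M nbrw" and ?a = "length x" and ?b = "length y" and ?m = "lcp_len x y"
  have "mu (lines_through x y) = (\<integral>\<^sup>+ p. ennreal (4 ^ ?m) * indicator (cyl x \<times> cyl y) p
      + ennreal (4 ^ ?m) * indicator (cyl y \<times> cyl x) p \<partial>?N)"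
    unfolding mu_Fint
  proof (rule nn_integral_cong_AE)
    show "AE p in ?N. Fint x y p = ennreal (4 ^ ?m) * indicator (cyl x \<times> cyl y) p
      + ennreal (4 ^ ?m) * indicator (cyl y \<times> cyl x) p"
      using AE_rays by eventually_elim (use case2_pt[OF m1 m2] in auto)
  qed
  also have "\<dots> = ennreal (4 ^ ?m) * emeasure ?N (cyl x \<times> cyl y)
        + ennreal (4 ^ ?m) * emeasure ?N (cyl y \<times> cyl x)"
    by (subst nn_integral_add) (auto simp: nn_integral_cmult_indicator)
  also have "\<dots> = ennreal (4 ^ ?m * (P ?a * P ?b) + 4 ^ ?m * (P ?b * P ?a))"
    using P_nonneg[of ?a] P_nonneg[of ?b]
    by (simp add: prod_meas cyl_meas[OF vx] cyl_meas[OF vy] ennreal_mult' ennreal_plus[symmetric] mult_nonneg_nonneg) (simp add: mult_2 algebra_simps)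
  also have "\<dots> = ennreal (8/9 * (1/2) ^ (?a + ?b - 2 * ?m))"
    by (simp only: arith2[OF m1 m2])
  finally show ?thesis .
qed

lemma lines_sym: "lines_through x y = lines_through y x"
  unfolding lines_through_def by blast

lemma lcp_full: "lcp_len x y = length x \<Longrightarrow> length x = length y \<Longrightarrow> x = y"
  using lcp_eq[of _ x y] by (auto intro: nth_equalityI)

theorem mainTheorem4:
  fixes x y :: "nat list"
  assumes "is_vertex x" and "is_vertex y" and "x \<noteq> y"
  shows "mu (lines_through x y) = ennreal (8/9 * (1/2) ^ tdist x y)"
proof -
  let ?m = "lcp_len x y"
  have le: "?m \<le> length x" "?m \<le> length y" using lcp_le by auto
  show ?thesis
  proof (cases "?m = length x")
    case True
    then have lt: "length x < length y" using le assms(3) lcp_full by fastforce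
    show ?thesis using case1_int[OF assms(1,2) True lt] True by (simp add: tdist_def)
  next
    case F: False
    show ?thesis
    proof (cases "?m = length y")
      case True
      then have T': "lcp_len y x = length y" by (simp add: lcp_sym)
      have lt: "length y < length x" using le F True by linarith
      show ?thesis using case1_int[OF assms(2,1) T' lt] True
        by (simp add: tdist_def lines_sym)
    next
      case False
      then show ?thesis using case2_int[OF assms(1,2)] F le by (simp add: tdist_def)
    qed
  qed
qed

end
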